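(* Let $M=(S,s_0,\mathbf{P})$ be a DTMC satisfying the standing assumptions below, let $p\in(0,1]$, and let \[\Theta=\{s_0s_1\cdots s_n\in \operatorname{Paths}_{\operatorname{fin}}(M)\mid s_n\in S_p \text{ and } s_i\notin S_p \text{ for all } i<n\}.\] Then $\Theta$ is a $p$-cause for $\lozenge \mathit{error}$ in $M$, $\Theta$ is a regular language (of finite words over the alphabet $S$), and $\Theta\preceq\Pi$ for every $p$-cause $\Pi$ for $\lozenge\mathit{error}$ in $M$.
   Context: A DTMC $M=(S,s_0,\mathbf{P})$ has a finite state set $S$, initial state $s_0\in S$, and transition function $\mathbf{P}\colon S\times S\to[0,1]$ with $\sum_{s'}\mathbf{P}(s,s')=1$ for all $s$. A finite path is a sequence $s_0s_1\cdots s_n$ starting in the initial state with $\mathbf{P}(s_i,s_{i+1})>0$ for all $i$; infinite paths are defined analogously; $\operatorname{Paths}_{\operatorname{fin}}(M)$ and $\operatorname{Paths}(M)$ denote these sets, $\operatorname{Pref}(\pi)$ the set of finite prefixes of a path $\pi$, and $\operatorname{last}(s_0\cdots s_n)=s_n$. The probability measure on infinite paths is the standard one generated by cylinder sets, with $\Pr(\operatorname{Cyl}(s_0\cdots s_n))=\prod_i\mathbf{P}(s_i,s_{i+1})$. $\Pr_s(\lozenge X)$ denotes the probability of eventually reaching the set $X$ when starting in state $s$. Standing assumptions: every state is reached from $s_0$ with positive probability; there are distinguished states $\mathit{error},\mathit{safe}\in S$ such that $\mathit{safe}$ is the (unique) state from which $\mathit{error}$ is not reachable, so $\Pr_{\mathit{safe}}(\lozenge\mathit{error})=0$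 and $\Pr_{s_0}(\lozenge\{\mathit{error},\mathit{safe}\})=1$. For $p\in(0,1]$ let $S_p=\{s\in S\mid \Pr_s(\lozenge\mathit{error})\ge p\}$. A finite path $\hat\pi$ is a $p$-critical prefix if $\Pr_{\operatorname{last}(\hat\pi)}(\lozenge\mathit{error})\ge p$ (this equals the conditional probability of $\lozenge\mathit{error}$ given the cylinder of $\hat\pi$). A set $\Pi$ of finite paths is prefix-free if for each $\hat\pi\in\Pi$ the only prefix of $\hat\pi$ in $\Pi$ is $\hat\pi$ itself. A $p$-cause for $\lozenge\mathit{error}$ in $M$ is a prefix-free set $\Pi\subseteq\operatorname{Paths}_{\operatorname{fin}}(M)$ such that (1) almost every infinite path that visits $\mathit{error}$ has a prefix in $\Pi$, and (2) every element of $\Pi$ is a $p$-critical prefix. For $p$-causes $\Pi,\Phi$ write $\Pi\preceq\Phi$ iff for every $\phi\in\Phi$ there is $\pi\in\Pi$ with $\pi\in\operatorname{Pref}(\phi)$. *)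

theory Defs
  imports "HOL-Probability.Probability" "HOL-Library.Sublist"
begin

text \<open>DTMC with finite state type 's (the state set S is UNIV :: 's set),
  transition function P, initial state s0.  Infinite paths are streams
  (position 0 = starting state), finite paths are nonempty lists.\<close>

definition dtmc_trans :: "('s \<Rightarrow> 's \<Rightarrow> real) \<Rightarrow> bool" where
  "dtmc_trans P \<longleftrightarrow> (\<forall>s s'. 0 \<le> P s s') \<and> (\<forall>s. (\<Sum>s'\<in>UNIV. P s s') = 1)"

fun cyl_prob :: "('s \<Rightarrow> 's \<Rightarrow> real) \<Rightarrow> 's \<Rightarrow> 's list \<Rightarrow> real" where
  "cyl_prob P s [] = 1"
| "cyl_prob P s (x # xs) = P s x * cyl_prob P x xs"

text \<open>Pr s is the probability measure on infinite state sequences starting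
  in s, generated by the cylinder sets (this characterizes it uniquely).\<close>
definition is_path_measure ::
  "('s \<Rightarrow> 's \<Rightarrow> real) \<Rightarrow> ('s \<Rightarrow> 's stream measure) \<Rightarrow> bool" where
  "is_path_measure P Pr \<longleftrightarrow> (\<forall>s.
      prob_space (Pr s) \<and>
      sets (Pr s) = sets (stream_space (count_space UNIV)) \<and>
      (\<forall>xs. measure (Pr s) {\<omega>. stake (Suc (length xs)) \<omega> = s # xs} = cyl_prob P s xs))"

definition reach_prob :: "('s \<Rightarrow> 's stream measure) \<Rightarrow> 's \<Rightarrow> 's set \<Rightarrow> real" where
  "reach_prob Pr s X = measure (Pr s) {\<omega> \<in> space (Pr s). \<exists>i. \<omega> !! i \<in> X}"

definition fin_path :: "('s \<Rightarrow> 's \<Rightarrow> real) \<Rightarrow> 's \<Rightarrow> 's list \<Rightarrow> bool" where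
  "fin_path P s0 xs \<longleftrightarrow> xs \<noteq> [] \<and> hd xs = s0 \<and>
      (\<forall>i. Suc i < length xs \<longrightarrow> P (xs ! i) (xs ! Suc i) > 0)"

definition Paths_fin :: "('s \<Rightarrow> 's \<Rightarrow> real) \<Rightarrow> 's \<Rightarrow> 's list set" where
  "Paths_fin P s0 = {xs. fin_path P s0 xs}"

definition standing_assms ::
  "('s \<Rightarrow> 's \<Rightarrow> real) \<Rightarrow> ('s \<Rightarrow> 's stream measure) \<Rightarrow> 's \<Rightarrow> 's \<Rightarrow> 's \<Rightarrow> bool" where
  "standing_assms P Pr s0 error safe \<longleftrightarrow>
      dtmc_trans P \<and> is_path_measure P Pr \<and>
      (\<forall>s. reach_prob Pr s0 {s} > 0) \<and>
      (\<forall>s. reach_prob Pr s {error} = 0 \<longleftrightarrow> s = safe) \<and>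
      reach_prob Pr s0 {error, safe} = 1"

definition S_p :: "('s \<Rightarrow> 's stream measure) \<Rightarrow> 's \<Rightarrow> real \<Rightarrow> 's set" where
  "S_p Pr error p = {s. reach_prob Pr s {error} \<ge> p}"

definition critical_prefix ::
  "('s \<Rightarrow> 's \<Rightarrow> real) \<Rightarrow> ('s \<Rightarrow> 's stream measure) \<Rightarrow> 's \<Rightarrow> 's \<Rightarrow> real \<Rightarrow> 's list \<Rightarrow> bool" where
  "critical_prefix P Pr s0 error p xs \<longleftrightarrow>
      fin_path P s0 xs \<and> reach_prob Pr (last xs) {error} \<ge> p"

definition prefix_free :: "'s list set \<Rightarrow> bool" where
  "prefix_free C \<longleftrightarrow> (\<forall>\<pi>\<in>C. \<forall>\<pi>'\<in>C. prefix \<pi>' \<pi> \<longrightarrow> \<pi>' = \<pi>)"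

definition p_cause ::
  "('s \<Rightarrow> 's \<Rightarrow> real) \<Rightarrow> ('s \<Rightarrow> 's stream measure) \<Rightarrow> 's \<Rightarrow> 's \<Rightarrow> real \<Rightarrow> 's list set \<Rightarrow> bool" where
  "p_cause P Pr s0 error p C \<longleftrightarrow>
      C \<subseteq> Paths_fin P s0 \<and> prefix_free C \<and>
      (AE \<omega> in Pr s0. (\<exists>i. \<omega> !! i = error) \<longrightarrow> (\<exists>n. stake n \<omega> \<in> C)) \<and>
      (\<forall>\<pi>\<in>C. critical_prefix P Pr s0 error p \<pi>)"

definition cause_le :: "'s list set \<Rightarrow> 's list set \<Rightarrow> bool" where
  "cause_le C D \<longleftrightarrow> (\<forall>\<phi>\<in>D. \<exists>\<pi>\<in>C. prefix \<pi> \<phi>)"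

definition regular :: "('a::finite) list set \<Rightarrow> bool" where
  "regular L \<longleftrightarrow> (\<exists>(Q::nat set) q0 \<delta> F. finite Q \<and> q0 \<in> Q \<and>
      (\<forall>q\<in>Q. \<forall>a. \<delta> q a \<in> Q) \<and> F \<subseteq> Q \<and>
      L = {w. fold (\<lambda>a q. \<delta> q a) w q0 \<in> F})"

end

theory Submission
  imports Defs
begin

lemma sp_UNIV: "space (stream_space (count_space UNIV)) = (UNIV :: 'a stream set)"
  by (simp add: space_stream_space)

lemma pred_sets: "Measurable.pred (stream_space (count_space UNIV)) Q \<Longrightarrow> {\<omega>::'a stream. Q \<omega>} \<in> sets (stream_space (count_space UNIV))"
  unfolding pred_def by (simp add: sp_UNIV)

lemma reach_sets: "{\<omega>::('a::countable) stream. \<exists>i. \<omega> !! i \<in> X} \<in> sets (stream_space (count_space UNIV))"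
  by (rule pred_sets) measurable

lemma bad_sets: "{\<omega>::('a::countable) stream. \<omega> !! 0 = s \<and> P (\<omega> !! k) (\<omega> !! Suc k) = (0::real)} \<in> sets (stream_space (count_space UNIV))"
  by (rule pred_sets) measurable
lemma cyl_sets: "{\<omega>::('a::countable) stream. stake n \<omega> = ys} \<in> sets (stream_space (count_space UNIV))"
  by (rule pred_sets) measurable


lemma cyl_zero: "Suc k < length (s#xs) \<Longrightarrow> P ((s#xs)!k) ((s#xs)!Suc k) = 0 \<Longrightarrow> cyl_prob P s xs = 0"
proof (induction xs arbitrary: s k)
  case Nil then show ?case by simp
next
  case (Cons x xs)
  show ?case
  proof (cases k)
    case 0 then show ?thesis using Cons.prems by simp
  next
    case (Suc k')
    then have "cyl_prob P x xs = 0" using Cons.prems by (intro Cons.IH[of k']) auto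
    then show ?thesis by simp
  qed
qed

context
  fixes P :: "'s::finite \<Rightarrow> 's \<Rightarrow> real" and Pr :: "'s \<Rightarrow> 's stream measure"
  assumes pm: "is_path_measure P Pr"
begin

lemma ps: "prob_space (Pr s)" using pm unfolding is_path_measure_def by blast
lemma sets_Pr: "sets (Pr s) = sets (stream_space (count_space UNIV))" using pm unfolding is_path_measure_def by blast
lemma space_Pr: "space (Pr s) = UNIV"
  using sets_eq_imp_space_eq[OF sets_Pr[of s]] by (simp add: sp_UNIV)
lemma cyl_Pr: "measure (Pr s) {\<omega>. stake (Suc (length xs)) \<omega> = s # xs} = cyl_prob P s xs"
  using pm unfolding is_path_measure_def by blast

lemma AE_start: "AE \<omega> in Pr s. \<omega> !! 0 = s"
proof -
  have m: "measure (Pr s) {\<omega>. shd \<omega> = s} = 1" using cyl_Pr[of s "[]"] by simp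
  show ?thesis using prob_space.AE_prob_1[OF ps m] by simp
qed

lemma bad_null: "measure (Pr s) {\<omega>. \<omega> !! 0 = s \<and> P (\<omega> !! k) (\<omega> !! Suc k) = 0} = 0"
proof -
  define B where "B = {xs. set xs \<subseteq> UNIV \<and> length xs = Suc k \<and> P ((s#xs)!k) ((s#xs)!Suc k) = 0}"
  have finB: "finite B"
    by (rule finite_subset[OF _ finite_lists_length_eq[of "UNIV::'s set" "Suc k"]]) (auto simp: B_def)
  have sub: "{\<omega>. \<omega> !! 0 = s \<and> P (\<omega> !! k) (\<omega> !! Suc k) = 0} \<subseteq> (\<Union>xs\<in>B. {\<omega>. stake (Suc (length xs)) \<omega> = s # xs})"
  proof
    fix \<omega> assume a: "\<omega> \<in> {\<omega>. \<omega> !! 0 = s \<and> P (\<omega> !! k) (\<omega> !! Suc k) = 0}"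
    define xs where "xs = stake (Suc k) (stl \<omega>)"
    have st: "stake (Suc (Suc k)) \<omega> = s # xs" using a
      by (simp add: xs_def del: stake.simps) (metis stake.simps(2) snth.simps(1))
    have "(s#xs) ! k = \<omega> !! k" "(s#xs) ! Suc k = \<omega> !! Suc k"
      unfolding st[symmetric] by (simp_all add: stake_nth del: stake.simps)
    then have "xs \<in> B" using a by (simp add: B_def xs_def)
    moreover have "length xs = Suc k" by (simp add: xs_def)
    ultimately have "\<omega> \<in> {\<omega>. stake (Suc (length xs)) \<omega> = s # xs}"
      using st by (simp only: mem_Collect_eq)
    then show "\<omega> \<in> (\<Union>xs\<in>B. {\<omega>. stake (Suc (length xs)) \<omega> = s # xs})" using \<open>xs \<in> B\<close> by blast
  qed
  have "measure (Pr s) {\<omega>. \<omega> !! 0 = s \<and> P (\<omega> !! k) (\<omega> !! Suc k) = 0}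
      \<le> measure (Pr s) (\<Union>xs\<in>B. {\<omega>. stake (Suc (length xs)) \<omega> = s # xs})"
    by (rule finite_measure.finite_measure_mono[OF prob_space.finite_measure[OF ps] sub])
       (use cyl_sets in \<open>intro sets.finite_UN finB ballI, simp only: sets_Pr\<close>)
  also have "\<dots> \<le> (\<Sum>xs\<in>B. measure (Pr s) {\<omega>. stake (Suc (length xs)) \<omega> = s # xs})"
    by (rule measure_UNION_le[OF finB]) (simp only: sets_Pr cyl_sets)
  also have "\<dots> = 0"
    by (intro sum.neutral ballI, simp only: cyl_Pr, rule cyl_zero[of k]) (auto simp: B_def)
  finally show ?thesis by (simp add: measure_nonneg antisym)
qed

lemma AE_trans: "AE \<omega> in Pr s. \<omega> !! 0 = s \<and> (\<forall>k. P (\<omega> !! k) (\<omega> !! Suc k) \<noteq> 0)"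
proof -
  have "AE \<omega> in Pr s. \<omega> !! 0 = s \<longrightarrow> P (\<omega> !! k) (\<omega> !! Suc k) \<noteq> 0" for k
  proof (rule AE_I')
    show "{\<omega>. \<omega> !! 0 = s \<and> P (\<omega> !! k) (\<omega> !! Suc k) = 0} \<in> null_sets (Pr s)"
      using bad_null[of s k] finite_measure.emeasure_eq_measure[OF prob_space.finite_measure[OF ps]] bad_sets
      by (auto simp: null_sets_def sets_Pr)
  qed (auto simp: space_Pr)
  then have "AE \<omega> in Pr s. \<forall>k. \<omega> !! 0 = s \<longrightarrow> P (\<omega> !! k) (\<omega> !! Suc k) \<noteq> 0"
    unfolding AE_all_countable by blast
  with AE_start show ?thesis by eventually_elim auto
qed

lemma reach_self: "reach_prob Pr e {e} = 1"
proof -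
  have "measure (Pr e) {\<omega>. stake (Suc 0) \<omega> = [e]} = 1" using cyl_Pr[of e "[]"] by simp
  moreover have "measure (Pr e) {\<omega>. stake (Suc 0) \<omega> = [e]} \<le> reach_prob Pr e {e}"
    unfolding reach_prob_def
    by (rule finite_measure.finite_measure_mono[OF prob_space.finite_measure[OF ps]])
       (use reach_sets[of "{e}"] in \<open>auto simp: space_Pr sets_Pr intro: exI[of _ 0]\<close>)
  moreover have "reach_prob Pr e {e} \<le> 1" unfolding reach_prob_def by (rule prob_space.prob_le_1[OF ps])
  ultimately show ?thesis by linarith
qed
end

lemma last_take_Suc: "j < length xs \<Longrightarrow> last (take (Suc j) xs) = xs ! j"
  by (subst last_conv_nth) auto

lemma fin_path_snoc: "w \<noteq> [] \<Longrightarrow> fin_path P s0 (w @ [a]) \<longleftrightarrow> fin_path P s0 w \<and> P (last w) a > 0"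
proof -
  assume w: "w \<noteq> []"
  have "(\<forall>i. Suc i < length (w@[a]) \<longrightarrow> P ((w@[a]) ! i) ((w@[a]) ! Suc i) > 0) \<longleftrightarrow>
        (\<forall>i. Suc i < length w \<longrightarrow> P (w ! i) (w ! Suc i) > 0) \<and> P (last w) a > 0" (is "?L \<longleftrightarrow> ?R")
  proof
    assume L: ?L
    have "P (last w) a > 0" using L[rule_format, of "length w - 1"] w
      by (simp add: nth_append last_conv_nth)
    moreover have "\<forall>i. Suc i < length w \<longrightarrow> P (w ! i) (w ! Suc i) > 0"
    proof (intro allI impI)
      fix i assume "Suc i < length w" then show "P (w ! i) (w ! Suc i) > 0"
        using L[rule_format, of i] by (simp add: nth_append)
    qed
    ultimately show ?R by blast
  next
    assume R: ?R
    show ?L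
    proof (intro allI impI)
      fix i assume i: "Suc i < length (w@[a])"
      show "P ((w@[a]) ! i) ((w@[a]) ! Suc i) > 0"
      proof (cases "Suc i < length w")
        case True then show ?thesis using R by (simp add: nth_append)
      next
        case False then have "i = length w - 1" "Suc i = length w" using i by auto
        then show ?thesis using R w by (simp add: nth_append last_conv_nth)
      qed
    qed
  qed
  then show ?thesis using w unfolding fin_path_def by (simp add: hd_append)
qed

lemma allnot_snoc: "w \<noteq> [] \<Longrightarrow> (\<forall>i<length (w@[a]) - 1. (w@[a]) ! i \<notin> X) \<longleftrightarrow>
   (\<forall>i<length w - 1. w ! i \<notin> X) \<and> last w \<notin> X"
  apply (auto simp: nth_append last_conv_nth)
  by (metis One_nat_def Suc_pred length_greater_0_conv less_Suc_eq)

definition Vp :: "('s \<Rightarrow> 's \<Rightarrow> real) \<Rightarrow> 's \<Rightarrow> 's set \<Rightarrow> 's list \<Rightarrow> bool" where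
  "Vp P s0 X w \<longleftrightarrow> fin_path P s0 w \<and> (\<forall>i<length w - 1. w ! i \<notin> X)"

lemma Vp_snoc: "w \<noteq> [] \<Longrightarrow> Vp P s0 X (w @ [a]) \<longleftrightarrow> Vp P s0 X w \<and> last w \<notin> X \<and> P (last w) a > 0"
  unfolding Vp_def using fin_path_snoc[of w P s0 a] allnot_snoc[of w a X] by blast

lemma Vp_single: "Vp P s0 X [a] \<longleftrightarrow> a = s0"
  by (auto simp: Vp_def fin_path_def)

definition code :: "'s::countable \<Rightarrow> nat" where "code s = to_nat s + 2"

definition dl :: "('s::countable \<Rightarrow> 's \<Rightarrow> real) \<Rightarrow> 's \<Rightarrow> 's set \<Rightarrow> nat \<Rightarrow> 's \<Rightarrow> nat" where
  "dl P s0 X q a = (if q = 0 then (if a = s0 then code a else 1) else if q = 1 then 1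
     else (if from_nat (q - 2) \<notin> X \<and> P (from_nat (q - 2)) a > 0 then code a else 1))"

lemma code_ne: "code s \<noteq> 0" "code s \<noteq> 1" "from_nat (code s - 2) = s"
  by (auto simp: code_def)

lemma code_inj: "code a = code b \<longleftrightarrow> a = b"
  by (auto simp: code_def)

lemma fold_dl: "fold (\<lambda>a q. dl P s0 X q a) w 0 =
   (if w = [] then 0 else if Vp P s0 X w then code (last w) else 1)"
proof (induction w rule: rev_induct)
  case Nil then show ?case by simp
next
  case (snoc a w)
  show ?case
  proof (cases "w = []")
    case True then show ?thesis by (simp add: dl_def Vp_single)
  next
    case False
    show ?thesis
    proof (cases "Vp P s0 X w")
      case True
      then show ?thesis using False snoc.IH Vp_snoc[OF False, of P s0 X a]
        by (simp add: dl_def code_def)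
    next
      case F2: False
      then show ?thesis using False snoc.IH Vp_snoc[OF False, of P s0 X a]
        by (simp add: dl_def code_def)
    qed
  qed
qed

lemma regular_Vp: "regular {w. Vp P s0 X w \<and> last w \<in> (X::('s::finite) set)}"
proof -
  let ?Q = "{0,1} \<union> range (code :: 's \<Rightarrow> nat)"
  let ?F = "code ` X"
  have eq: "{w. Vp P s0 X w \<and> last w \<in> X} = {w. fold (\<lambda>a q. dl P s0 X q a) w 0 \<in> ?F}"
  proof (rule set_eqI)
    fix w
    have "Vp P s0 X w \<Longrightarrow> w \<noteq> []" by (simp add: Vp_def fin_path_def)
    then show "w \<in> {w. Vp P s0 X w \<and> last w \<in> X} \<longleftrightarrow> w \<in> {w. fold (\<lambda>a q. dl P s0 X q a) w 0 \<in> ?F}"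
      unfolding fold_dl by (auto simp: image_iff code_def)
  qed
  have "finite ?Q" by simp
  moreover have "(0::nat) \<in> ?Q" by simp
  moreover have "\<forall>q\<in>?Q. \<forall>a. dl P s0 X q a \<in> ?Q" by (simp add: dl_def)
  moreover have "?F \<subseteq> ?Q" by auto
  ultimately show ?thesis unfolding regular_def eq by blast
qed


theorem proposition1:
  fixes P :: "'s::finite \<Rightarrow> 's \<Rightarrow> real"
    and Pr :: "'s \<Rightarrow> 's stream measure"
    and s0 error safe :: 's and p :: real
  assumes "standing_assms P Pr s0 error safe"
    and "0 < p" and "p \<le> 1"
  defines "\<Theta> \<equiv> {xs \<in> Paths_fin P s0. last xs \<in> S_p Pr error p \<and>
                    (\<forall>i < length xs - 1. xs ! i \<notin> S_p Pr error p)}"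
  shows "p_cause P Pr s0 error p \<Theta> \<and> regular \<Theta> \<and>
         (\<forall>C. p_cause P Pr s0 error p C \<longrightarrow> cause_le \<Theta> C)"
proof -
  let ?X = "S_p Pr error p"
  have pm: "is_path_measure P Pr" and dt: "dtmc_trans P"
    using assms(1) unfolding standing_assms_def by blast+
  have Pnn: "0 \<le> P a b" for a b using dt unfolding dtmc_trans_def by blast
  have errX: "error \<in> ?X" using reach_self[OF pm, of error] assms(3) by (simp add: S_p_def)
  have Th: "\<Theta> = {w. Vp P s0 ?X w \<and> last w \<in> ?X}"
    unfolding \<Theta>_def Vp_def Paths_fin_def by auto
  have minpre: "\<exists>\<pi>\<in>\<Theta>. prefix \<pi> \<phi>" if fp: "fin_path P s0 \<phi>" and lX: "last \<phi> \<in> ?X" for \<phi>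
  proof -
    have ne: "\<phi> \<noteq> []" using fp by (simp add: fin_path_def)
    have ex: "\<exists>j. j < length \<phi> \<and> \<phi> ! j \<in> ?X"
      using lX ne by (intro exI[of _ "length \<phi> - 1"]) (simp add: last_conv_nth)
    define j where "j = (LEAST j. j < length \<phi> \<and> \<phi> ! j \<in> ?X)"
    have j: "j < length \<phi>" "\<phi> ! j \<in> ?X" using LeastI_ex[OF ex] unfolding j_def by auto
    have jl: "\<phi> ! i \<notin> ?X" if "i < j" for i
      using not_less_Least[of i "\<lambda>j. j < length \<phi> \<and> \<phi> ! j \<in> ?X"] that j(1) unfolding j_def by auto
    define \<pi> where "\<pi> = take (Suc j) \<phi>"
    have "fin_path P s0 \<pi>" using fp j(1) unfolding \<pi>_def fin_path_def by auto
    moreover have "last \<pi> \<in> ?X" using j by (simp add: \<pi>_def last_take_Suc)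
    moreover have "\<forall>i<length \<pi> - 1. \<pi> ! i \<notin> ?X" using jl j(1) by (simp add: \<pi>_def)
    ultimately have "\<pi> \<in> \<Theta>" unfolding \<Theta>_def Paths_fin_def by auto
    moreover have "prefix \<pi> \<phi>" by (simp add: \<pi>_def take_is_prefix)
    ultimately show ?thesis by blast
  qed
  have pf: "prefix_free \<Theta>"
    unfolding prefix_free_def
  proof (intro ballI impI)
    fix \<pi> \<pi>' assume a: "\<pi> \<in> \<Theta>" "\<pi>' \<in> \<Theta>" "prefix \<pi>' \<pi>"
    show "\<pi>' = \<pi>"
    proof (rule ccontr)
      assume "\<pi>' \<noteq> \<pi>"
      then have lt: "length \<pi>' < length \<pi>" using a(3) prefix_length_less by (auto simp: strict_prefix_def)
      obtain zs where zs: "\<pi> = \<pi>' @ zs" using a(3) prefixE by blast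
      have ne: "\<pi>' \<noteq> []" using a(2) by (simp add: \<Theta>_def Paths_fin_def fin_path_def)
      have "\<pi> ! (length \<pi>' - 1) = last \<pi>'" using ne by (simp add: zs nth_append last_conv_nth)
      moreover have "last \<pi>' \<in> ?X" using a(2) by (simp add: \<Theta>_def)
      moreover have "length \<pi>' - 1 < length \<pi> - 1" using lt ne by (cases \<pi>') auto
      moreover have "\<forall>i<length \<pi> - 1. \<pi> ! i \<notin> ?X" using a(1) by (simp add: \<Theta>_def)
      ultimately show False by metis
    qed
  qed
  have ae: "AE \<omega> in Pr s0. (\<exists>i. \<omega> !! i = error) \<longrightarrow> (\<exists>n. stake n \<omega> \<in> \<Theta>)"
    using AE_trans[OF pm, of s0]
  proof eventually_elim
    case (elim \<omega>)
    show ?case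
    proof
      assume "\<exists>i. \<omega> !! i = error"
      then have ex: "\<exists>j. \<omega> !! j \<in> ?X" using errX by auto
      define j where "j = (LEAST j. \<omega> !! j \<in> ?X)"
      have j: "\<omega> !! j \<in> ?X" using LeastI_ex[OF ex] unfolding j_def by auto
      have jl: "\<omega> !! i \<notin> ?X" if "i < j" for i
        using not_less_Least[of i "\<lambda>j. \<omega> !! j \<in> ?X"] that unfolding j_def by auto
      define \<pi> where "\<pi> = stake (Suc j) \<omega>"
      have "fin_path P s0 \<pi>" unfolding \<pi>_def fin_path_def
      proof (intro conjI allI impI)
        show "hd (stake (Suc j) \<omega>) = s0" using elim by simp
        fix i assume "Suc i < length (stake (Suc j) \<omega>)"
        then show "0 < P (stake (Suc j) \<omega> ! i) (stake (Suc j) \<omega> ! Suc i)"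
          using elim Pnn[of "\<omega> !! i" "\<omega> !! Suc i"] by (simp add: stake_nth less_le del: stake.simps)
      qed simp
      moreover have "last \<pi> = \<omega> !! j"
        unfolding \<pi>_def by (subst last_conv_nth) (auto simp: stake_nth simp del: stake.simps)
      moreover have "\<forall>i<length \<pi> - 1. \<pi> ! i \<notin> ?X"
        using jl by (simp add: \<pi>_def stake_nth del: stake.simps)
      ultimately have "\<pi> \<in> \<Theta>" using j unfolding \<Theta>_def Paths_fin_def by auto
      then show "\<exists>n. stake n \<omega> \<in> \<Theta>" unfolding \<pi>_def by blast
    qed
  qed
  have crit: "\<forall>\<pi>\<in>\<Theta>. critical_prefix P Pr s0 error p \<pi>"
    unfolding \<Theta>_def critical_prefix_def Paths_fin_def S_p_def by auto
  have pc: "p_cause P Pr s0 error p \<Theta>"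
    unfolding p_cause_def using pf ae crit by (auto simp: \<Theta>_def)
  have reg: "regular \<Theta>" unfolding Th by (rule regular_Vp)
  have le: "\<forall>C. p_cause P Pr s0 error p C \<longrightarrow> cause_le \<Theta> C"
  proof (intro allI impI)
    fix C assume C: "p_cause P Pr s0 error p C"
    show "cause_le \<Theta> C" unfolding cause_le_def
    proof
      fix \<phi> assume "\<phi> \<in> C"
      then have "critical_prefix P Pr s0 error p \<phi>" using C unfolding p_cause_def by blast
      then show "\<exists>\<pi>\<in>\<Theta>. prefix \<pi> \<phi>"
        by (intro minpre) (auto simp: critical_prefix_def S_p_def)
    qed
  qed
  show ?thesis using pc reg le by blast
qed

end
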